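(* Let $r\ge 1$, $m=2^r$, and let $n$ be a positive integer with $m\mid n$. Let $b$ be an odd positive integer having property $\mathcal{P}$ with respect to $n$. Then $x^n+b^m$ is irreducible over $\mathbb{Z}$.
   Context: For a positive integer $N$, a positive integer $b$ has property $\mathcal{P}$ with respect to $N$ if either $b$ is a prime number, or $b=(p_1^{b_1}p_2^{b_2}\cdots p_k^{b_k})^d$ where $k\ge 2$, $p_1,\dots,p_k$ are distinct primes, $b_1,\dots,b_k\ge 1$, $\gcd(b_1,\ldots,b_k)=1$, and $d$ is a positive integer with $\gcd(d,N)=1$. A monic polynomial in $\mathbb{Z}[x]$ of degree $\ge 1$ is irreducible over $\mathbb{Z}$ if it is not a product of two polynomials in $\mathbb{Z}[x]$ of degree at least $1$. *)

theory Defs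
  imports "HOL-Computational_Algebra.Computational_Algebra"
begin

definition hasP :: "nat \<Rightarrow> nat \<Rightarrow> bool" where
  "hasP N b \<longleftrightarrow> b > 0 \<and>
     (prime b \<or>
      (\<exists>c d. b = c ^ d \<and> d > 0 \<and> coprime d N \<and> c > 0 \<and>
         card (prime_factors c) \<ge> 2 \<and>
         Gcd ((\<lambda>p. multiplicity p c) ` prime_factors c) = 1))"

definition irreducible_over_Z :: "int poly \<Rightarrow> bool" where
  "irreducible_over_Z f \<longleftrightarrow> degree f \<ge> 1 \<and>
     \<not> (\<exists>g h. degree g \<ge> 1 \<and> degree h \<ge> 1 \<and> f = g * h)"

end

theory Submission
  imports Defs "HOL-Computational_Algebra.Field_as_Ring" "Jordan_Normal_Form.Char_Poly"
begin

lemma hasP_dvd: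
  fixes c b d K N :: nat
  assumes hP: "hasP N b" and eq: "c ^ K = b ^ d" and KN: "K dvd N" and K0: "K > 0"
  shows "K dvd d"
proof -
  have b0: "b > 0" using hP unfolding hasP_def by auto
  have c0: "c > 0" using eq b0 K0 by (metis gr0I power_0_left power_not_zero zero_less_iff_neq_zero)
  from hP consider (pr) "prime b" | (pw) c1 e where "b = c1 ^ e" "e > 0" "coprime e N" "c1 > 0"
      "Gcd ((\<lambda>p. multiplicity p c1) ` prime_factors c1) = 1"
    unfolding hasP_def by blast
  then show ?thesis
  proof cases
    case pr
    have "multiplicity b (c ^ K) = K * multiplicity b c"
      using pr c0 by (simp add: prime_elem_multiplicity_power_distrib)
    moreover have "multiplicity b (b ^ d) = d" using pr by simp
    ultimately have "d = K * multiplicity b c" using eq by simp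
    thus ?thesis by simp
  next
    case pw
    define g where "g = gcd K d"
    have g0: "g > 0" using K0 by (simp add: g_def)
    obtain K' where K': "K = g * K'" unfolding g_def by (metis gcd_dvd1 dvdE)
    obtain d' where d': "d = g * d'" unfolding g_def by (metis gcd_dvd2 dvdE)
    have cop: "coprime K' d'"
      using K' d' g0 unfolding g_def
      by (metis K0 div_gcd_coprime gcd_eq_0_iff nonzero_mult_div_cancel_left not_less0)
    have cope: "coprime K' e"
      using pw(3) KN K' by (metis coprime_commute coprime_mult_right_iff dvd_def)
    have "K' dvd multiplicity p c1" if p: "p \<in> prime_factors c1" for p
    proof -
      have pp: "prime p" using p by auto
      have "multiplicity p (c ^ K) = K * multiplicity p c"
        using pp c0 by (simp add: prime_elem_multiplicity_power_distrib)
      moreover have "multiplicity p (b ^ d) = (e * d) * multiplicity p c1"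
        using pp pw by (simp add: prime_elem_multiplicity_power_distrib power_mult[symmetric])
      ultimately have "K * multiplicity p c = (e * d) * multiplicity p c1" using eq by simp
      hence "g * (K' * multiplicity p c) = g * (e * d' * multiplicity p c1)"
        using K' d' by (simp add: ac_simps)
      hence "K' * multiplicity p c = e * d' * multiplicity p c1" using g0 by simp
      hence "K' dvd e * d' * multiplicity p c1" by (metis dvd_triv_left)
      thus ?thesis using cop cope
        by (metis coprime_dvd_mult_right_iff mult.assoc)
    qed
    hence "K' dvd Gcd ((\<lambda>p. multiplicity p c1) ` prime_factors c1)"
      by (intro Gcd_greatest) auto
    hence "K' = 1" using pw by simp
    thus ?thesis using K' d' by (metis dvd_triv_left mult.right_neutral)
  qed
qed


lemma even_choose_pow2:
  assumes "0 < i" "i < 2 ^ s"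
  shows "even ((2 ^ s) choose i :: nat)"
proof (rule ccontr)
  assume od: "odd ((2 ^ s) choose i)"
  obtain j where j: "i = Suc j" using assms by (cases i) auto
  have "Suc j * ((2 ^ s) choose Suc j) = 2 ^ s * ((2 ^ s - 1) choose j)"
    by (rule binomial_absorption)
  hence "(2::nat) ^ s dvd i * ((2 ^ s) choose i)" using j by (metis dvd_triv_left)
  moreover have "coprime ((2::nat) ^ s) ((2 ^ s) choose i)"
    using od by (simp add: coprime_commute)
  ultimately have "(2::nat) ^ s dvd i" by (simp add: coprime_dvd_mult_left_iff)
  hence "2 ^ s \<le> i" using assms by (simp add: dvd_imp_le)
  thus False using assms by simp
qed

lemma eisenstein_aux:
  fixes P a b :: "int poly"
  assumes P: "P = a * b" and da: "degree a > 0" and db: "degree b > 0"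
    and ev: "\<forall>i. 0 < i \<and> i < degree P \<longrightarrow> even (coeff P i)"
    and la: "odd (lead_coeff a)" and a0: "even (coeff a 0)" and b0: "odd (coeff b 0)"
  shows False
proof -
  define i where "i = (LEAST i. odd (coeff a i))"
  have oi: "odd (coeff a i)" unfolding i_def by (rule LeastI[of _ "degree a"]) (use la in auto)
  have ile: "i \<le> degree a" unfolding i_def by (rule Least_le) (use la in auto)
  have lt: "\<And>j. j < i \<Longrightarrow> even (coeff a j)" unfolding i_def using not_less_Least by blast
  have i0: "i \<noteq> 0"
  proof
    assume "i = 0" thus False using oi a0 by simp
  qed
  then obtain i' where i': "i = Suc i'" by (cases i) auto
  have anz: "a \<noteq> 0" "b \<noteq> 0" using da db by auto
  have dP: "degree P = degree a + degree b" using P anz by (simp add: degree_mult_eq)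
  have "coeff P i = (\<Sum>j\<le>i. coeff a j * coeff b (i - j))" using P by (simp add: coeff_mult)
  also have "\<dots> = (\<Sum>j\<le>i'. coeff a j * coeff b (i - j)) + coeff a i * coeff b 0"
    using i' by simp
  finally have eq: "coeff P i = (\<Sum>j\<le>i'. coeff a j * coeff b (i - j)) + coeff a i * coeff b 0" .
  have "even (\<Sum>j\<le>i'. coeff a j * coeff b (i - j))"
  proof (rule dvd_sum)
    fix j assume "j \<in> {..i'}"
    hence "j < i" using i' by auto
    thus "even (coeff a j * coeff b (i - j))" using lt by simp
  qed
  moreover have "odd (coeff a i * coeff b 0)" using oi b0 by simp
  ultimately have "odd (coeff P i)" using eq by simp
  moreover have "even (coeff P i)" using ev i0 ile dP db by auto
  ultimately show False by simp
qed

lemma eisenstein2: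
  fixes P a b :: "int poly"
  assumes P: "P = a * b"
    and ev: "\<forall>i. 0 < i \<and> i < degree P \<longrightarrow> even (coeff P i)"
    and c0: "coeff P 0 mod 4 = 2" and lc: "lead_coeff P = 1"
  shows "degree a = 0 \<or> degree b = 0"
proof (rule ccontr)
  assume "\<not> (degree a = 0 \<or> degree b = 0)"
  hence da: "degree a > 0" and db: "degree b > 0" by auto
  have "lead_coeff a * lead_coeff b = 1" using P lc by (simp add: lead_coeff_mult)
  hence la: "odd (lead_coeff a)" and lb: "odd (lead_coeff b)"
    by (metis even_mult_iff odd_one)+
  have pc: "coeff a 0 * coeff b 0 = coeff P 0" using P by (simp add: coeff_mult)
  have "even (coeff P 0)" using c0 by presburger  
  have ne: "\<not> (even (coeff a 0) \<and> even (coeff b 0))"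
  proof
    assume "even (coeff a 0) \<and> even (coeff b 0)"
    then obtain x y where "coeff a 0 = 2 * x" "coeff b 0 = 2 * y" by (auto elim!: evenE)
    hence "coeff P 0 = 4 * (x * y)" using pc by simp
    thus False using c0 by simp
  qed
  have "even (coeff a 0) \<or> even (coeff b 0)" using pc \<open>even (coeff P 0)\<close>
    by (metis even_mult_iff)
  thus False
  proof
    assume "even (coeff a 0)"
    with ne have "odd (coeff b 0)" by auto
    show False by (rule eisenstein_aux[OF P da db ev la]) fact+
  next
    assume "even (coeff b 0)"
    with ne have "odd (coeff a 0)" by auto
    have P': "P = b * a" using P by (simp add: mult.commute)
    show False by (rule eisenstein_aux[OF P' db da ev lb]) fact+
  qed
qed

lemma pcompose_xpow: "monom 1 n \<circ>\<^sub>p q = q ^ n"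
  by (induct n) (simp_all add: monom_Suc pcompose_pCons monom_0)

lemma F2_prime:
  fixes B :: int
  assumes B: "B mod 4 = 1"
  shows "prime_elem (monom 1 (2 ^ s) + [:B:] :: int poly)"
proof -
  define M :: nat where "M = 2 ^ s"
  define F where "F = (monom 1 M + [:B:] :: int poly)"
  have M0: "M > 0" unfolding M_def by simp
  have dF: "degree F = M" unfolding F_def using M0 by (simp add: degree_add_eq_left degree_monom_eq)
  have lF: "lead_coeff F = 1" unfolding dF unfolding F_def using M0 by (cases M) auto
  define P where "P = F \<circ>\<^sub>p [:1, 1:]"
  have Peq: "P = [:1,1:] ^ M + [:B:]" unfolding P_def F_def
    by (simp add: pcompose_add pcompose_xpow)
  have dP: "degree P = M" unfolding P_def using dF by (simp add: degree_pcompose)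
  have cP: "coeff P i = int (M choose i) + (if i = 0 then B else 0)" if "i \<le> M" for i
    using that unfolding Peq by (cases i) (simp_all add: coeff_linear_poly_power)
  have ev: "\<forall>i. 0 < i \<and> i < degree P \<longrightarrow> even (coeff P i)"
    using cP dP even_choose_pow2[of _ s] unfolding M_def by auto
  have c0: "coeff P 0 mod 4 = 2" using cP[of 0] B by simp presburger
  have lP: "lead_coeff P = 1" using dP cP[of M] M0 by simp
  have "irreducible F"
  proof (rule irreducibleI)
    show "F \<noteq> 0" using lF by auto
    show "\<not> is_unit F" using dF M0 by (auto simp: is_unit_poly_iff)
    fix a b assume ab: "F = a * b"
    hence "P = (a \<circ>\<^sub>p [:1,1:]) * (b \<circ>\<^sub>p [:1,1:])" unfolding P_def by (simp add: pcompose_mult)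
    from eisenstein2[OF this ev c0 lP] have "degree a = 0 \<or> degree b = 0"
      by (simp add: degree_pcompose)
    moreover have "lead_coeff a * lead_coeff b = 1" using ab lF by (simp add: lead_coeff_mult)
    ultimately show "is_unit a \<or> is_unit b"
      by (metis degree_eq_zeroE dvd_triv_left dvd_triv_right is_unit_const_poly_iff lead_coeff_pCons(2) pCons_0_0)
  qed
  thus ?thesis unfolding F_def M_def by (rule irreducible_imp_prime_elem)
qed

lemma dvd_prime_pow_degree:
  fixes F G :: "int poly"
  assumes F: "prime_elem F"
  shows "G dvd F ^ N \<Longrightarrow> degree F dvd degree G"
proof (induction N arbitrary: G)
  case 0
  hence "is_unit G" by simp
  thus ?case by (auto simp: is_unit_poly_iff)
next
  case (Suc N)
  have F0: "F \<noteq> 0" using F by auto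
  have G0: "G \<noteq> 0" using Suc.prems F0 by auto
  show ?case
  proof (cases "F dvd G")
    case True
    then obtain G' where G': "G = F * G'" by (auto elim: dvdE)
    have "F * G' dvd F * F ^ N" using Suc.prems G' by simp
    hence "G' dvd F ^ N" using F0 by simp
    hence "degree F dvd degree G'" by (rule Suc.IH)
    moreover have "degree G = degree F + degree G'" using G' G0 by (simp add: degree_mult_eq)
    ultimately show ?thesis by simp
  next
    case False
    have "coprime G (F ^ Suc N)" by (rule prime_elem_imp_power_coprime[OF F False])
    hence "is_unit G" using Suc.prems by (meson coprime_common_divisor dvd_refl)
    thus ?thesis by (auto simp: is_unit_poly_iff)
  qed
qed



lemma dvd_transfer_monic:
  fixes g f :: "int poly"
  assumes lg: "lead_coeff g = 1"
    and dv: "map_poly (of_int :: int \<Rightarrow> complex) g dvd map_poly of_int f"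
  shows "g dvd f"
proof -
  have g0: "g \<noteq> 0" using lg by auto
  obtain q r where qr: "pseudo_divmod f g = (q, r)" by (cases "pseudo_divmod f g") auto
  from pseudo_divmod[OF g0 qr] lg have eq: "f = g * q + r" and rd: "r = 0 \<or> degree r < degree g"
    by auto
  let ?h = "map_poly (of_int :: int \<Rightarrow> complex)"
  have "?h f = ?h g * ?h q + ?h r" unfolding eq by (simp add: hom_distribs)
  hence "?h r = ?h f - ?h g * ?h q" by simp
  hence "?h g dvd ?h r" using dv by simp
  show ?thesis
  proof (cases "r = 0")
    case True thus ?thesis using eq by simp
  next
    case False
    hence "?h r \<noteq> 0" by simp
    with \<open>?h g dvd ?h r\<close> have "degree (?h g) \<le> degree (?h r)" by (rule dvd_imp_degree_le)
    hence "degree g \<le> degree r" by simp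
    with rd False show ?thesis by simp
  qed
qed

lemma prod_list_norm_pow:
  fixes as :: "complex list"
  shows "(\<And>a. a \<in> set as \<Longrightarrow> norm a ^ n = c) \<Longrightarrow> norm (\<Prod>a\<leftarrow>as. - a) ^ n = c ^ length as"
  by (induct as) (simp_all add: norm_mult power_mult_distrib)

lemma const_term:
  fixes g :: "int poly" and B :: int
  assumes lg: "lead_coeff g = 1"
    and dv: "g dvd monom 1 n + [:B:]"
  shows "\<bar>coeff g 0\<bar> ^ n = \<bar>B\<bar> ^ degree g"
proof -
  let ?h = "map_poly (of_int :: int \<Rightarrow> complex)"
  obtain as where fact: "Polynomial.smult (lead_coeff (?h g)) (\<Prod>a\<leftarrow>as. [:- a, 1:]) = ?h g"
    and len: "length as = degree (?h g)"
    using fundamental_theorem_algebra_factorized by blast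
  have lh: "lead_coeff (?h g) = 1" using lg by simp
  have gC: "?h g = (\<Prod>a\<leftarrow>as. [:- a, 1:])" using fact lh by simp
  have dvC: "?h g dvd ?h (monom 1 n + [:B:])" using dv by (simp add: of_int_poly_hom.hom_dvd)
  have root: "norm a ^ n = \<bar>of_int B\<bar>" if a: "a \<in> set as" for a
  proof -
    have "poly (?h g) a = 0" unfolding gC using a
      by (simp add: poly_prod_list prod_list_zero_iff)
    hence "poly (?h (monom 1 n + [:B:])) a = 0" using dvC by (metis dvd_def mult_zero_left poly_mult)
    hence "a ^ n + of_int B = 0" by (simp add: hom_distribs poly_monom)
    hence "a ^ n = - of_int B" by (simp add: eq_neg_iff_add_eq_0)
    hence "norm (a ^ n) = norm (- (of_int B :: complex))" by simp
    thus ?thesis by (simp add: norm_power)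
  qed
  have "coeff (?h g) 0 = poly (?h g) 0" by (simp add: poly_0_coeff_0)
  also have "\<dots> = (\<Prod>a\<leftarrow>as. - a)" unfolding gC by (simp add: poly_prod_list o_def)
  finally have c0: "of_int (coeff g 0) = (\<Prod>a\<leftarrow>as. - a :: complex)" by simp
  have "norm (of_int (coeff g 0) :: complex) ^ n = \<bar>of_int B\<bar> ^ length as"
    unfolding c0 using root by (rule prod_list_norm_pow)
  hence "real_of_int (\<bar>coeff g 0\<bar> ^ n) = real_of_int (\<bar>B\<bar> ^ degree g)"
    using len by simp
  thus ?thesis by (simp only: of_int_eq_iff)
qed


lemma coprime_no_common_root:
  fixes p q :: "complex poly"
  assumes p0: "p \<noteq> 0" and nr: "\<And>z. poly p z = 0 \<Longrightarrow> poly q z \<noteq> 0"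
  shows "coprime p q"
proof -
  define D where "D = gcd p q"
  have D0: "D \<noteq> 0" using p0 by (simp add: D_def)
  have "degree D = 0"
  proof (rule ccontr)
    assume "degree D \<noteq> 0"
    hence "\<not> constant (poly D)" by (simp add: constant_degree)
    then obtain z where "poly D z = 0" using fundamental_theorem_of_algebra by blast
    moreover have "D dvd p" "D dvd q" by (simp_all add: D_def)
    ultimately have "poly p z = 0" "poly q z = 0" by (auto elim!: dvdE)
    thus False using nr by blast
  qed
  hence "is_unit D" using D0 by (simp add: is_unit_iff_degree)
  thus ?thesis unfolding D_def is_unit_gcd .
qed

lemma power_root_poly:
  fixes g :: "int poly" and t :: nat
  assumes lg: "lead_coeff g = 1" and dg: "degree g > 0"
  shows "\<exists>G :: int poly. lead_coeff G = 1 \<and> degree G = degree g \<and>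
    (\<forall>l. poly (map_poly of_int G) l = 0 \<longrightarrow>
       (\<exists>a::complex. poly (map_poly of_int g) a = 0 \<and> l = a ^ t))"
proof -
  define d where "d = degree g"
  have g0: "g \<noteq> 0" using lg by auto
  define Q where "Q j = fst (pseudo_divmod (monom 1 (t + j)) g)" for j
  define R where "R j = snd (pseudo_divmod (monom 1 (t + j)) g)" for j
  have QR: "monom 1 (t + j) = g * Q j + R j" and Rd: "\<And>i. i \<ge> d \<Longrightarrow> coeff (R j) i = 0" for j
  proof -
    have pd: "pseudo_divmod (monom 1 (t + j)) g = (Q j, R j)" by (simp add: Q_def R_def)
    from pseudo_divmod[OF g0 pd] lg show "monom 1 (t + j) = g * Q j + R j" by auto
    from pseudo_divmod(2)[OF g0 pd] show "\<And>i. i \<ge> d \<Longrightarrow> coeff (R j) i = 0"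
      unfolding d_def using coeff_eq_0 by fastforce
  qed
  define A where "A = mat d d (\<lambda>(i, j). coeff (R j) i)"
  have A: "A \<in> carrier_mat d d" by (simp add: A_def)
  define G where "G = char_poly A"
  have dG: "degree G = d" and lG: "lead_coeff G = 1"
    using degree_monic_char_poly[OF A] by (auto simp: G_def)
  let ?h = "map_poly (of_int :: int \<Rightarrow> complex)"
  let ?AC = "map_mat (of_int :: int \<Rightarrow> complex) A"
  have AC: "?AC \<in> carrier_mat d d" using A by simp
  have GC: "?h G = char_poly ?AC" unfolding G_def by (rule of_int_hom.char_poly_hom[OF A, symmetric])
  have "\<exists>a. poly (?h g) a = 0 \<and> l = a ^ t" if l: "poly (?h G) l = 0" for l
  proof (rule ccontr)
    assume nex: "\<not> (\<exists>a. poly (?h g) a = 0 \<and> l = a ^ t)"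
    have "eigenvalue ?AC l" using l GC eigenvalue_root_char_poly[OF AC] by simp
    then obtain v where v: "v \<in> carrier_vec d" "v \<noteq> 0\<^sub>v d" "?AC *\<^sub>v v = l \<cdot>\<^sub>v v"
      unfolding eigenvalue_def eigenvector_def using AC by auto
    define p where "p = (\<Sum>j\<in>{0..<d}. Polynomial.smult (v $ j) (monom 1 j))"
    have cp: "coeff p i = (if i < d then v $ i else 0)" for i
    proof -
      have "coeff p i = (\<Sum>j\<in>{0..<d}. if i = j then v $ j else 0)"
        unfolding p_def coeff_sum by (rule sum.cong) (auto simp: coeff_monom)
      thus ?thesis by (simp add: sum.delta)
    qed
    define QQ where "QQ = (\<Sum>j\<in>{0..<d}. Polynomial.smult (v $ j) (?h (Q j)))"
    define S where "S = (\<Sum>j\<in>{0..<d}. Polynomial.smult (v $ j) (?h (R j)))"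
    have "monom 1 t * p = (\<Sum>j\<in>{0..<d}. Polynomial.smult (v $ j) (monom 1 (t + j)))"
      unfolding p_def by (simp add: sum_distrib_left mult_monom)
    also have "\<dots> = (\<Sum>j\<in>{0..<d}. Polynomial.smult (v $ j) (?h (g * Q j + R j)))"
      by (rule sum.cong[OF refl]) (simp flip: QR add: map_poly_monom)
    also have "\<dots> = ?h g * QQ + S"
      unfolding QQ_def S_def by (simp add: hom_distribs sum.distrib sum_distrib_left smult_add_right)
    finally have eq1: "monom 1 t * p = ?h g * QQ + S" .
    have "S = Polynomial.smult l p"
    proof (rule poly_eqI)
      fix i
      show "coeff S i = coeff (Polynomial.smult l p) i"
      proof (cases "i < d")
        case True
        have "coeff S i = (\<Sum>j\<in>{0..<d}. ?AC $$ (i, j) * v $ j)"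
          unfolding S_def using True by (simp add: coeff_sum A_def mult.commute)
        also have "\<dots> = (?AC *\<^sub>v v) $ i"
          using True v(1) AC by (simp add: mult_mat_vec_def scalar_prod_def)
        also have "\<dots> = l * v $ i" using v(3) True v(1) by simp
        finally show ?thesis using cp True by simp
      next
        case False
        thus ?thesis unfolding S_def using cp Rd by (simp add: coeff_sum)
      qed
    qed
    with eq1 have "(monom 1 t - [:l:]) * p = ?h g * QQ" by (simp add: algebra_simps)
    hence dvd1: "?h g dvd p * (monom 1 t - [:l:])" by (simp add: mult.commute)
    have hg0: "?h g \<noteq> 0" using g0 by simp
    have cop: "coprime (?h g) (monom 1 t - [:l:])"
    proof (rule coprime_no_common_root[OF hg0])
      fix z assume "poly (?h g) z = 0"
      thus "poly (monom 1 t - [:l:]) z \<noteq> 0" using nex by (auto simp: poly_monom)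
    qed
    hence "?h g dvd p" using dvd1 by (simp add: coprime_dvd_mult_left_iff)
    moreover have "p \<noteq> 0"
    proof
      assume "p = 0"
      hence "\<forall>i<d. v $ i = 0" using cp by (metis coeff_0)
      hence "v = 0\<^sub>v d" using v(1) by (intro eq_vecI) auto
      thus False using v(2) by simp
    qed
    ultimately have "degree (?h g) \<le> degree p" by (rule dvd_imp_degree_le)
    moreover have "degree p < d"
    proof -
      have "degree p \<le> d - 1" by (rule degree_le) (use cp dg d_def in auto)
      thus ?thesis using dg d_def by simp
    qed
    ultimately show False unfolding d_def by simp
  qed
  thus ?thesis using dG lG d_def by blast
qed


lemma exists_pow2_odd:
  fixes n :: nat
  shows "n > 0 \<Longrightarrow> \<exists>s t. n = 2 ^ s * t \<and> odd t"
proof (induction n rule: less_induct)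
  case (less n)
  show ?case
  proof (cases "even n")
    case True
    then obtain m where m: "n = 2 * m" by (auto elim: evenE)
    have "m < n" "m > 0" using m less.prems by auto
    then obtain s t where "m = 2 ^ s * t" "odd t" using less.IH by blast
    hence "n = 2 ^ Suc s * t \<and> odd t" using m by simp
    thus ?thesis by blast
  next
    case False
    hence "n = 2 ^ 0 * n \<and> odd n" by simp
    thus ?thesis by blast
  qed
qed

lemma prod_list_dvd_pow:
  fixes q :: "'a :: comm_monoid_mult"
  shows "(\<And>a. a \<in> set xs \<Longrightarrow> f a dvd q) \<Longrightarrow> prod_list (map f xs) dvd q ^ length xs"
  by (induct xs) (auto intro: mult_dvd_mono)

lemma odd_sq_mod4:
  fixes x :: int
  assumes "odd x" shows "x ^ 2 mod 4 = 1"
proof -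
  obtain k where "x = 2 * k + 1" using assms by (auto elim: oddE)
  hence "x ^ 2 = 4 * (k * k + k) + 1" by (simp add: power2_eq_square algebra_simps)
  then obtain j where "x ^ 2 = 4 * j + 1" by blast
  thus ?thesis by presburger
qed



lemma poly_hF:
  "poly (map_poly (of_int :: int \<Rightarrow> complex) (monom 1 m + [:c:])) x = x ^ m + of_int c"
proof -
  have "map_poly (of_int :: int \<Rightarrow> complex) (monom 1 m + [:c:]) = monom 1 m + [:of_int c:]"
    by (rule poly_eqI) (simp add: coeff_map_poly coeff_monom coeff_pCons split: nat.split)
  thus ?thesis by (simp add: poly_monom)
qed

lemma key:
  fixes r n b :: nat and g :: "int poly"
  assumes r1: "r \<ge> 1" and n0: "n > 0" and rn: "2 ^ r dvd n" and ob: "odd b" and hP: "hasP n b"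
    and lg: "lead_coeff g = 1" and dg: "degree g > 0"
    and dv: "g dvd monom 1 n + [: (int b) ^ (2 ^ r) :]"
  shows "n dvd degree g"
proof -
  define B where "B = (int b) ^ (2 ^ r)"
  define d where "d = degree g"
  obtain s t where st: "n = 2 ^ s * t" "odd t" using exists_pow2_odd n0 by blast
  define K where "K = n div 2 ^ r"
  have nK: "n = 2 ^ r * K" using rn K_def by simp
  have K0: "K > 0" using nK n0 by (cases K) auto
  have ct: "\<bar>coeff g 0\<bar> ^ n = \<bar>B\<bar> ^ d" using const_term[OF lg] dv unfolding B_def d_def by blast
  have B0: "\<bar>B\<bar> = int (b ^ (2 ^ r))" unfolding B_def by simp
  define c where "c = nat \<bar>coeff g 0\<bar>"
  have "int (c ^ n) = int ((b ^ (2 ^ r)) ^ d)" using ct B0 unfolding c_def by simp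
  hence cn: "c ^ n = (b ^ (2 ^ r)) ^ d" by (simp only: of_nat_eq_iff)
  have e1: "c ^ n = (c ^ K) ^ (2 ^ r)" unfolding nK power_mult[symmetric]
    by (rule arg_cong[where f = "\<lambda>x. c ^ x"]) (rule mult.commute)
  have e3: "(b ^ (2 ^ r)) ^ d = (b ^ d) ^ (2 ^ r)" unfolding power_mult[symmetric]
    by (rule arg_cong[where f = "\<lambda>x. b ^ x"]) (rule mult.commute)
  have cKp: "(c ^ K) ^ (2 ^ r) = (b ^ d) ^ (2 ^ r)" by (rule trans[OF e1[symmetric] trans[OF cn e3]])
  have cK: "c ^ K = b ^ d" by (rule power_eq_imp_eq_base[OF cKp]) simp_all
  have Kn: "K dvd n" unfolding nK by (rule dvd_triv_right)
  have Kd: "K dvd d" by (rule hasP_dvd[OF hP cK Kn K0])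
  have "t dvd K * 2 ^ r" using nK st by (metis dvd_triv_right mult.commute)
  moreover have "coprime t (2 ^ r)" using st(2) by simp
  ultimately have "t dvd K" by (simp add: coprime_dvd_mult_left_iff)
  hence td: "t dvd d" using Kd by (rule dvd_trans)
  let ?h = "map_poly (of_int :: int \<Rightarrow> complex)"
  obtain G :: "int poly" where G: "lead_coeff G = 1" "degree G = d"
    "\<forall>l. poly (?h G) l = 0 \<longrightarrow> (\<exists>a::complex. poly (?h g) a = 0 \<and> l = a ^ t)"
    using power_root_poly[OF lg dg, of t] unfolding d_def by blast
  define F2 where "F2 = (monom 1 (2 ^ s) + [:B:] :: int poly)"
  have dvC: "?h g dvd ?h (monom 1 n + [:B:])" using dv unfolding B_def by (simp add: of_int_poly_hom.hom_dvd)
  have pF: "poly (?h F2) x = x ^ (2 ^ s) + of_int B" for x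
    unfolding F2_def by (rule poly_hF)
  have rootF: "poly (?h F2) l = 0" if l: "poly (?h G) l = 0" for l
  proof -
    obtain a where a: "poly (?h g) a = 0" "l = a ^ t" using G(3) l by blast
    obtain k where k: "?h (monom 1 n + [:B:]) = ?h g * k" using dvC by (elim dvdE)
    have "poly (?h (monom 1 n + [:B:])) a = 0" unfolding k poly_mult a(1) by simp
    moreover have "poly (?h (monom 1 n + [:B:])) a = a ^ n + of_int B"
      by (rule poly_hF)
    ultimately have "a ^ n + of_int B = 0" by simp
    moreover have "(a ^ t) ^ (2 ^ s) = a ^ n"
    proof -
      have "(a ^ t) ^ (2 ^ s) = a ^ (t * 2 ^ s)" by (rule power_mult[symmetric])
      also have "t * 2 ^ s = n" using st(1) by simp
      finally show ?thesis .
    qed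
    ultimately show ?thesis unfolding pF a(2) by simp
  qed
  obtain as where fact: "Polynomial.smult (lead_coeff (?h G)) (\<Prod>a\<leftarrow>as. [:- a, 1:]) = ?h G"
    and len: "length as = degree (?h G)"
    using fundamental_theorem_algebra_factorized by blast
  have GC: "?h G = (\<Prod>a\<leftarrow>as. [:- a, 1:])" using fact G(1) by simp
  have pd: "(\<Prod>a\<leftarrow>as. [:- a, 1:]) dvd (?h F2) ^ length as"
  proof (rule prod_list_dvd_pow)
    fix a assume a: "a \<in> set as"
    have "poly (?h G) a = 0" unfolding GC using a by (simp add: poly_prod_list prod_list_zero_iff)
    hence "poly (?h F2) a = 0" by (rule rootF)
    thus "[:- a, 1:] dvd ?h F2" by (simp add: poly_eq_0_iff_dvd)
  qed
  have lenD: "length as = d" using len G(2) by simp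
  have hGd: "?h G dvd (?h F2) ^ d" using pd unfolding GC[symmetric] lenD .
  have "?h G dvd ?h (F2 ^ d)" unfolding of_int_poly_hom.hom_power by (rule hGd)
  hence GF: "G dvd F2 ^ d" by (rule dvd_transfer_monic[OF G(1)])
  have e2: "(2::nat) ^ r = 2 ^ (r - 1) * 2" using r1 by (cases r) auto
  have "B = (int b ^ 2 ^ (r - 1)) ^ 2" unfolding B_def e2 by (rule power_mult)
  moreover have "odd (int b ^ 2 ^ (r - 1))" using ob by simp
  ultimately have Bm: "B mod 4 = 1" using odd_sq_mod4 by simp
  have "prime_elem F2" unfolding F2_def by (rule F2_prime[OF Bm])
  hence "degree F2 dvd degree G" using GF by (rule dvd_prime_pow_degree)
  moreover have "degree F2 = 2 ^ s" unfolding F2_def by (simp add: degree_add_eq_left degree_monom_eq)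
  ultimately have "2 ^ s dvd d" using G(2) by simp
  moreover have "coprime ((2::nat) ^ s) t" using st(2) by (simp add: coprime_commute)
  ultimately have "2 ^ s * t dvd d" using td by (simp add: divides_mult)
  thus ?thesis using st d_def by simp
qed

theorem lemma5:
  fixes r n b :: nat
  assumes "r \<ge> 1" and "n > 0" and "2 ^ r dvd n"
    and "odd b" and "hasP n b"
  shows "irreducible_over_Z (monom 1 n + [: (int b) ^ (2 ^ r) :])"
proof -
  define f where "f = (monom 1 n + [: (int b) ^ (2 ^ r) :] :: int poly)"
  have df: "degree f = n" unfolding f_def using assms(2) by (simp add: degree_add_eq_left degree_monom_eq)
  have lf: "lead_coeff f = 1" unfolding df unfolding f_def using assms(2) by (cases n) auto
  have "\<not> (\<exists>g h. degree g \<ge> 1 \<and> degree h \<ge> 1 \<and> f = g * h)"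
  proof
    assume "\<exists>g h. degree g \<ge> 1 \<and> degree h \<ge> 1 \<and> f = g * h"
    then obtain g h where gh: "degree g \<ge> 1" "degree h \<ge> 1" "f = g * h" by blast
    have g0: "g \<noteq> 0" "h \<noteq> 0" using gh by auto
    define u where "u = lead_coeff g"
    have "u * lead_coeff h = 1" using gh(3) lf unfolding u_def by (simp add: lead_coeff_mult)
    hence "u = 1 \<or> u = -1" unfolding zmult_eq_1_iff by blast
    hence uu: "u * u = 1" by auto
    define g' where "g' = Polynomial.smult u g"
    have lg': "lead_coeff g' = 1" unfolding g'_def u_def using uu u_def g0 by simp
    have dg': "degree g' = degree g" unfolding g'_def using uu by (cases "u = 0") auto
    have "f = g' * Polynomial.smult u h" unfolding g'_def using gh(3) uu by simp
    hence "g' dvd f" by (metis dvd_triv_left)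
    hence gdv: "g' dvd monom 1 n + [: (int b) ^ (2 ^ r) :]" unfolding f_def .
    have dg0: "degree g' > 0" using dg' gh(1) by simp
    have "n dvd degree g'" by (rule key[OF assms lg' dg0 gdv])
    hence "n \<le> degree g'" using dg0 by (rule dvd_imp_le)
    hence "n \<le> degree g" using dg' by simp
    moreover have "degree g + degree h = n" using gh(3) g0 df by (simp add: degree_mult_eq)
    ultimately show False using gh(2) by linarith
  qed
  thus ?thesis unfolding irreducible_over_Z_def using df assms(2) f_def by simp
qed

end
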